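(* Let $S$ be a semigroup with a left fairly invariant finitely-additive probability measure $\mu$, and let $T$ be a subsemigroup of $S$ with $\mu(T)>0$. Then $T$ is left fairly amenable. The same holds with "right" in place of "left".
   Context: For a semigroup $U$, $s\in U$, $A\subseteq U$: $s$ acts injectively on the left (right) of $A$ if $a\mapsto sa$ ($a\mapsto as$) is injective on $A$. A finitely-additive probability measure on $U$ is $\mu:\mathcal P(U)\to[0,1]$ with $\mu(U)=1$, additive on disjoint sets; it is left fairly invariant if $\mu(sA)=\mu(A)$ whenever $s$ acts injectively on the left of $A$ (right fairly invariant analogously with $As$). $U$ is left (right) fairly amenable if such a measure exists. *)

theory Defs
  imports Complex_Main
begin

text \<open>A semigroup is modelled by a type of class semigroup_mult; a subsemigroup
  (or the whole semigroup, as UNIV) is a carrier set U closed under multiplication.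
  Measures are functions on subsets, only their values on subsets of U matter.\<close>

definition subsemigroup :: "'a::semigroup_mult set \<Rightarrow> bool" where
  "subsemigroup T \<longleftrightarrow> (\<forall>x\<in>T. \<forall>y\<in>T. x * y \<in> T)"

definition fa_prob_measure :: "'a set \<Rightarrow> ('a set \<Rightarrow> real) \<Rightarrow> bool" where
  "fa_prob_measure U \<mu> \<longleftrightarrow>
     (\<forall>A. A \<subseteq> U \<longrightarrow> 0 \<le> \<mu> A \<and> \<mu> A \<le> 1) \<and> \<mu> U = 1 \<and>
     (\<forall>A B. A \<subseteq> U \<longrightarrow> B \<subseteq> U \<longrightarrow> A \<inter> B = {} \<longrightarrow> \<mu> (A \<union> B) = \<mu> A + \<mu> B)"

definition left_fairly_invariant :: "'a::semigroup_mult set \<Rightarrow> ('a set \<Rightarrow> real) \<Rightarrow> bool" where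
  "left_fairly_invariant U \<mu> \<longleftrightarrow>
     (\<forall>s\<in>U. \<forall>A. A \<subseteq> U \<longrightarrow> inj_on (\<lambda>a. s * a) A \<longrightarrow> \<mu> ((\<lambda>a. s * a) ` A) = \<mu> A)"

definition right_fairly_invariant :: "'a::semigroup_mult set \<Rightarrow> ('a set \<Rightarrow> real) \<Rightarrow> bool" where
  "right_fairly_invariant U \<mu> \<longleftrightarrow>
     (\<forall>s\<in>U. \<forall>A. A \<subseteq> U \<longrightarrow> inj_on (\<lambda>a. a * s) A \<longrightarrow> \<mu> ((\<lambda>a. a * s) ` A) = \<mu> A)"

definition left_fairly_amenable :: "'a::semigroup_mult set \<Rightarrow> bool" where
  "left_fairly_amenable U \<longleftrightarrow> (\<exists>\<mu>. fa_prob_measure U \<mu> \<and> left_fairly_invariant U \<mu>)"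

definition right_fairly_amenable :: "'a::semigroup_mult set \<Rightarrow> bool" where
  "right_fairly_amenable U \<longleftrightarrow> (\<exists>\<mu>. fa_prob_measure U \<mu> \<and> right_fairly_invariant U \<mu>)"

end

theory Submission
  imports Defs
begin

lemma fa_restrict:
  assumes m: "fa_prob_measure UNIV \<mu>" and pos: "\<mu> T > 0"
  shows "fa_prob_measure T (\<lambda>A. \<mu> A / \<mu> T)"
proof -
  have add: "\<And>A B. A \<inter> B = {} \<Longrightarrow> \<mu> (A \<union> B) = \<mu> A + \<mu> B"
    using m unfolding fa_prob_measure_def by blast
  have nn: "\<And>A. 0 \<le> \<mu> A" using m unfolding fa_prob_measure_def by blast
  have mono: "\<And>A. A \<subseteq> T \<Longrightarrow> \<mu> A \<le> \<mu> T"
  proof -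
    fix A assume "A \<subseteq> T"
    hence "T = A \<union> (T - A)" by blast
    hence "\<mu> T = \<mu> A + \<mu> (T - A)" using add[of A "T - A"] by (metis Diff_disjoint)
    thus "\<mu> A \<le> \<mu> T" using nn[of "T - A"] by linarith
  qed
  show ?thesis unfolding fa_prob_measure_def
  proof (intro conjI allI impI)
    fix A assume "A \<subseteq> T"
    thus "0 \<le> \<mu> A / \<mu> T" using nn pos by simp
    show "\<mu> A / \<mu> T \<le> 1" using mono[OF \<open>A \<subseteq> T\<close>] pos by simp
  next
    show "\<mu> T / \<mu> T = 1" using pos by simp
  next
    fix A B :: "'a set" assume "A \<inter> B = {}"
    thus "\<mu> (A \<union> B) / \<mu> T = \<mu> A / \<mu> T + \<mu> B / \<mu> T"
      using add by (simp add: add_divide_distrib)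
  qed
qed

theorem mainTheorem13:
  fixes \<mu> :: "'a::semigroup_mult set \<Rightarrow> real" and T :: "'a set"
  assumes "fa_prob_measure UNIV \<mu>" and "subsemigroup T" and "\<mu> T > 0"
  shows "(left_fairly_invariant UNIV \<mu> \<longrightarrow> left_fairly_amenable T) \<and>
         (right_fairly_invariant UNIV \<mu> \<longrightarrow> right_fairly_amenable T)"
proof -
  have f: "fa_prob_measure T (\<lambda>A. \<mu> A / \<mu> T)" using fa_restrict assms(1,3) .
  show ?thesis
  proof (intro conjI impI)
    assume "left_fairly_invariant UNIV \<mu>"
    hence "left_fairly_invariant T (\<lambda>A. \<mu> A / \<mu> T)"
      unfolding left_fairly_invariant_def by simp
    thus "left_fairly_amenable T" using f unfolding left_fairly_amenable_def by blast
  next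
    assume "right_fairly_invariant UNIV \<mu>"
    hence "right_fairly_invariant T (\<lambda>A. \<mu> A / \<mu> T)"
      unfolding right_fairly_invariant_def by simp
    thus "right_fairly_amenable T" using f unfolding right_fairly_amenable_def by blast
  qed
qed

end
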